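(* Let $R$ be a commutative ring with identity that is not an integral domain. If $\gamma_t(\Gamma(R))<\infty$ and $R$ is not isomorphic to $\mathbb{Z}_2\times D$ for any integral domain $D$, then $\gamma_t(\Gamma(R))=\gamma(\Gamma(R))$.
   Context: All rings are commutative with identity. The zero-divisor graph $\Gamma(R)$ has vertex set $Z(R)^*$ (nonzero zero-divisors); distinct $r,s$ are adjacent iff $rs=0$, and $x$ is adjacent to itself iff $x^2=0$. A dominating set is $X\subseteq Z(R)^*$ such that every vertex not in $X$ is adjacent to some element of $X$; a total dominating set is $X$ such that every vertex (including those in $X$) is adjacent to some element of $X$ (self-adjacency counts). $\gamma,\gamma_t$ are the respective minimum cardinalities. *)

theory Defs
  imports "HOL-Algebra.Algebra" "HOL-Library.Extended_Nat"
begin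

text \<open>Nonzero zero-divisors Z(R)^* of a commutative ring R (vertex set of the zero-divisor graph).\<close>
definition zd_star :: "('a, 'b) ring_scheme \<Rightarrow> 'a set" where
  "zd_star R = {x \<in> carrier R. x \<noteq> \<zero>\<^bsub>R\<^esub> \<and>
      (\<exists>y \<in> carrier R. y \<noteq> \<zero>\<^bsub>R\<^esub> \<and> x \<otimes>\<^bsub>R\<^esub> y = \<zero>\<^bsub>R\<^esub>)}"

text \<open>Adjacency in the zero-divisor graph: distinct r,s adjacent iff rs = 0; x adjacent to itself iff x^2 = 0.
  Both cases are captured by x y = 0.\<close>
definition zd_adj :: "('a, 'b) ring_scheme \<Rightarrow> 'a \<Rightarrow> 'a \<Rightarrow> bool" where
  "zd_adj R x y \<longleftrightarrow> x \<in> zd_star R \<and> y \<in> zd_star R \<and> x \<otimes>\<^bsub>R\<^esub> y = \<zero>\<^bsub>R\<^esub>"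

definition zd_dominating :: "('a, 'b) ring_scheme \<Rightarrow> 'a set \<Rightarrow> bool" where
  "zd_dominating R S \<longleftrightarrow> S \<subseteq> zd_star R \<and>
      (\<forall>v \<in> zd_star R. v \<notin> S \<longrightarrow> (\<exists>x \<in> S. zd_adj R v x))"

definition zd_total_dominating :: "('a, 'b) ring_scheme \<Rightarrow> 'a set \<Rightarrow> bool" where
  "zd_total_dominating R S \<longleftrightarrow> S \<subseteq> zd_star R \<and>
      (\<forall>v \<in> zd_star R. \<exists>x \<in> S. zd_adj R v x)"

text \<open>Domination numbers; \<infinity> if no finite (total) dominating set exists.\<close>
definition zd_gamma :: "('a, 'b) ring_scheme \<Rightarrow> enat" where
  "zd_gamma R = Inf {enat (card S) | S. finite S \<and> zd_dominating R S}"

definition zd_gamma_t :: "('a, 'b) ring_scheme \<Rightarrow> enat" where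
  "zd_gamma_t R = Inf {enat (card S) | S. finite S \<and> zd_total_dominating R S}"

end

theory Submission
  imports Defs
begin


definition domS :: "('a, 'b) ring_scheme \<Rightarrow> 'a set \<Rightarrow> bool" where
  "domS R S \<longleftrightarrow> S \<subseteq> zd_star R \<and> (\<forall>v\<in>zd_star R. v \<notin> S \<longrightarrow> (\<exists>x\<in>S. v \<otimes>\<^bsub>R\<^esub> x = \<zero>\<^bsub>R\<^esub>))"

definition badS :: "('a, 'b) ring_scheme \<Rightarrow> 'a set \<Rightarrow> 'a set" where
  "badS R S = {x\<in>S. \<forall>u\<in>S. x \<otimes>\<^bsub>R\<^esub> u \<noteq> \<zero>\<^bsub>R\<^esub>}"

context cring begin

lemma zdI: "x \<in> carrier R \<Longrightarrow> y \<in> carrier R \<Longrightarrow> x \<noteq> \<zero> \<Longrightarrow> y \<noteq> \<zero> \<Longrightarrow> x \<otimes> y = \<zero> \<Longrightarrow> x \<in> zd_star R"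
  unfolding zd_star_def by auto

lemma zdD: assumes "x \<in> zd_star R" shows "x \<in> carrier R" "x \<noteq> \<zero>" "\<exists>y\<in>carrier R. y \<noteq> \<zero> \<and> x \<otimes> y = \<zero>"
  using assms unfolding zd_star_def by auto

lemma replace:
  assumes fin: "finite S" and dom: "domS R S" and Rm: "Rm \<subseteq> S" and finA: "finite Ad"
    and AdZ: "Ad \<subseteq> zd_star R" and cardA: "card Ad \<le> card Rm"
    and cov: "\<forall>r\<in>Rm. \<exists>u\<in>(S - Rm) \<union> Ad. r \<otimes> u = \<zero>"
    and mul: "\<forall>r\<in>Rm. \<exists>a\<in>Ad. \<exists>c\<in>carrier R. a = r \<otimes> c"
    and good: "\<forall>a\<in>Ad. \<exists>u\<in>(S - Rm) \<union> Ad. a \<otimes> u = \<zero>"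
    and rb: "Rm \<inter> badS R S \<noteq> {}"
  shows "finite ((S - Rm) \<union> Ad) \<and> domS R ((S - Rm) \<union> Ad) \<and> card ((S - Rm) \<union> Ad) \<le> card S
     \<and> badS R ((S - Rm) \<union> Ad) \<subset> badS R S"
proof -
  let ?S' = "(S - Rm) \<union> Ad"
  have SZ: "S \<subseteq> zd_star R" using dom unfolding domS_def by auto
  have Zc: "zd_star R \<subseteq> carrier R" unfolding zd_star_def by auto
  have kill: "v \<otimes> a = \<zero>" if "v \<in> carrier R" "r \<in> Rm" "v \<otimes> r = \<zero>" "c \<in> carrier R" "a = r \<otimes> c" for v r a c
  proof -
    have "r \<in> carrier R" using that Rm SZ Zc by auto
    then have "v \<otimes> a = (v \<otimes> r) \<otimes> c" using that by (simp add: m_assoc[symmetric])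
    then show ?thesis using that by simp
  qed
  have d: "domS R ?S'"
    unfolding domS_def
  proof (intro conjI ballI impI)
    show "?S' \<subseteq> zd_star R" using SZ AdZ by auto
    fix v assume v: "v \<in> zd_star R" "v \<notin> ?S'"
    show "\<exists>x\<in>?S'. v \<otimes> x = \<zero>"
    proof (cases "v \<in> S")
      case True then have "v \<in> Rm" using v by auto
      then show ?thesis using cov by auto
    next
      case False
      then obtain x where x: "x \<in> S" "v \<otimes> x = \<zero>" using dom v unfolding domS_def by auto
      show ?thesis
      proof (cases "x \<in> Rm")
        case True
        then obtain a c where "a \<in> Ad" "c \<in> carrier R" "a = x \<otimes> c" using mul by blast
        then show ?thesis using kill[of v x c a] x True v Zc by auto
      next
        case False then show ?thesis using x by auto
      qed
    qed
  qed
  have c: "card ?S' \<le> card S"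
  proof -
    have "card ?S' \<le> card (S - Rm) + card Ad" by (rule card_Un_le)
    also have "card (S - Rm) = card S - card Rm" using Rm fin by (simp add: card_Diff_subset finite_subset)
    finally show ?thesis using cardA card_mono[OF fin Rm] by linarith
  qed
  have b: "badS R ?S' \<subseteq> badS R S - Rm"
  proof
    fix x assume x: "x \<in> badS R ?S'"
    then have xS': "x \<in> ?S'" and nx: "\<forall>u\<in>?S'. x \<otimes> u \<noteq> \<zero>" unfolding badS_def by auto
    have "x \<notin> Ad" using good nx by blast
    then have xS: "x \<in> S" "x \<notin> Rm" using xS' by auto
    have "\<forall>u\<in>S. x \<otimes> u \<noteq> \<zero>"
    proof
      fix u assume u: "u \<in> S"
      show "x \<otimes> u \<noteq> \<zero>"
      proof (cases "u \<in> Rm")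
        case True
        then obtain a c where "a \<in> Ad" "c \<in> carrier R" "a = u \<otimes> c" using mul by blast
        then show ?thesis using kill[of x u c a] nx True xS SZ Zc by auto
      next
        case False then show ?thesis using nx u by auto
      qed
    qed
    then show "x \<in> badS R S - Rm" using xS unfolding badS_def by auto
  qed
  then have "badS R ?S' \<subset> badS R S" using rb by blast
  then show ?thesis using d c fin finA by auto
qed


lemma zd_mult: assumes "x \<in> zd_star R" "c \<in> carrier R" "x \<otimes> c \<noteq> \<zero>" shows "x \<otimes> c \<in> zd_star R"
proof -
  obtain y where y: "y \<in> carrier R" "y \<noteq> \<zero>" "x \<otimes> y = \<zero>" using zdD[OF assms(1)] by auto
  have xc: "x \<in> carrier R" using zdD[OF assms(1)] by auto
  have "(x \<otimes> c) \<otimes> y = (x \<otimes> y) \<otimes> c" using xc y assms(2) by (simp add: m_ac)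
  then show ?thesis using zdI[of "x \<otimes> c" y] y xc assms by auto
qed

lemma zero3: assumes "a \<in> carrier R" "b \<in> carrier R" "c \<in> carrier R" "a \<otimes> c = \<zero>"
  shows "a \<otimes> b \<otimes> c = \<zero>" "c \<otimes> (a \<otimes> b) = \<zero>" "b \<otimes> a \<otimes> c = \<zero>"
proof -
  have "a \<otimes> b \<otimes> c = b \<otimes> (a \<otimes> c)" using assms(1-3) by (simp add: m_ac)
  also have "\<dots> = \<zero>" using assms by simp
  finally show "a \<otimes> b \<otimes> c = \<zero>" .
  then show "c \<otimes> (a \<otimes> b) = \<zero>" using assms by (simp add: m_comm)
  then show "b \<otimes> a \<otimes> c = \<zero>" using assms by (simp add: m_ac)
qed

lemma step:
  assumes fin: "finite S" and dom: "domS R S" and nb: "badS R S \<noteq> {}"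
    and ne: "\<not> (\<exists>e. S = {e} \<and> e \<otimes> e = e)"
  shows "\<exists>S'. finite S' \<and> domS R S' \<and> card S' \<le> card S \<and> badS R S' \<subset> badS R S"
proof -
  have SZ: "S \<subseteq> zd_star R" using dom unfolding domS_def by auto
  have Zc: "zd_star R \<subseteq> carrier R" unfolding zd_star_def by auto
  have Sc: "S \<subseteq> carrier R" using SZ Zc by auto
  have bad_iff: "x \<in> badS R S \<longleftrightarrow> x \<in> S \<and> (\<forall>u\<in>S. x \<otimes> u \<noteq> \<zero>)" for x unfolding badS_def by auto
  obtain b where b: "b \<in> badS R S" using nb by auto
  have bS: "b \<in> S" and bb: "\<forall>u\<in>S. b \<otimes> u \<noteq> \<zero>" using b bad_iff by auto
  have bc: "b \<in> carrier R" using bS Sc by auto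
  show ?thesis
  proof (cases "\<exists>s\<in>S. s \<notin> badS R S")
    case True
    then obtain s where s: "s \<in> S" "s \<notin> badS R S" by auto
    then obtain t where t: "t \<in> S" "s \<otimes> t = \<zero>" using bad_iff by auto
    have sc: "s \<in> carrier R" using s Sc by auto
    have sb: "s \<noteq> b" using s b by auto
    obtain y where y: "y \<in> carrier R" "y \<noteq> \<zero>" "b \<otimes> y = \<zero>" using zdD[of b] bS SZ by auto
    have bs0: "b \<otimes> s \<noteq> \<zero>" using bb s by auto
    have yZ: "y \<in> zd_star R" using zdI[of y b] y bc bS SZ zdD(2) by (auto simp: m_comm)
    have bsy: "(b \<otimes> s) \<otimes> y = \<zero>" using zero3 y bc sc by simp
    have bsZ: "b \<otimes> s \<in> zd_star R" using zdI[of "b \<otimes> s" y] bsy y bc sc bs0 by auto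
    have tb: "t \<noteq> b" using t bb sc bc s by (auto simp: m_comm)
    have r: "finite ((S - {b, s}) \<union> {b \<otimes> s, y}) \<and> domS R ((S - {b, s}) \<union> {b \<otimes> s, y}) \<and> card ((S - {b, s}) \<union> {b \<otimes> s, y}) \<le> card S
     \<and> badS R ((S - {b, s}) \<union> {b \<otimes> s, y}) \<subset> badS R S"
    proof (rule replace[OF fin dom])
      show "{b, s} \<subseteq> S" using bS s by auto
      show "finite {b \<otimes> s, y}" by auto
      show "{b \<otimes> s, y} \<subseteq> zd_star R" using bsZ yZ by auto
      show "card {b \<otimes> s, y} \<le> card {b, s}" using sb by (simp add: card_insert_if)
      show "\<forall>r\<in>{b, s}. \<exists>u\<in>S - {b, s} \<union> {b \<otimes> s, y}. r \<otimes> u = \<zero>"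
      proof
        fix r assume "r \<in> {b, s}"
        then consider "r = b" | "r = s" by auto
        then show "\<exists>u\<in>S - {b, s} \<union> {b \<otimes> s, y}. r \<otimes> u = \<zero>"
        proof cases
          case 1 then show ?thesis using y by auto
        next
          case 2
          show ?thesis
          proof (cases "t = s")
            case True
            have "s \<otimes> (b \<otimes> s) = b \<otimes> (s \<otimes> s)" using sc bc by (simp add: m_ac)
            then have "s \<otimes> (b \<otimes> s) = \<zero>" using t True bc by simp
            then show ?thesis using 2 by auto
          next
            case False then show ?thesis using t tb 2 by auto
          qed
        qed
      qed
      show "\<forall>r\<in>{b, s}. \<exists>a\<in>{b \<otimes> s, y}. \<exists>c\<in>carrier R. a = r \<otimes> c"
        using bc sc m_comm[OF bc sc] by blast
      show "\<forall>a\<in>{b \<otimes> s, y}. \<exists>u\<in>S - {b, s} \<union> {b \<otimes> s, y}. a \<otimes> u = \<zero>"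
        using bsy y bc sc by (auto simp: m_comm)
      show "{b, s} \<inter> badS R S \<noteq> {}" using b by auto
    qed
    then show ?thesis by (rule exI)
  next
    case False
    then have allbad: "\<forall>x\<in>S. \<forall>u\<in>S. x \<otimes> u \<noteq> \<zero>" using bad_iff by auto
    have moveE: ?thesis if x: "x \<in> S" "z \<in> carrier R" "x \<otimes> x \<otimes> z = \<zero>" "x \<otimes> z \<noteq> \<zero>" for x z
    proof -
      have xc: "x \<in> carrier R" using x Sc by auto
      have xZ: "x \<in> zd_star R" using x SZ by auto
      have 1: "x \<otimes> (x \<otimes> z) = \<zero>" using x xc by (simp add: m_assoc)
      have xzZ: "x \<otimes> z \<in> zd_star R" using zd_mult[OF xZ x(2) x(4)] .
      have 2: "(x \<otimes> z) \<otimes> (x \<otimes> z) = \<zero>"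
      proof -
        have "(x \<otimes> z) \<otimes> (x \<otimes> z) = (x \<otimes> x \<otimes> z) \<otimes> z" using xc x(2) by (simp add: m_ac)
        then show ?thesis using x xc by simp
      qed
      have "finite ((S - {x}) \<union> {x \<otimes> z}) \<and> domS R ((S - {x}) \<union> {x \<otimes> z}) \<and> card ((S - {x}) \<union> {x \<otimes> z}) \<le> card S
        \<and> badS R ((S - {x}) \<union> {x \<otimes> z}) \<subset> badS R S"
      proof (rule replace[OF fin dom])
        show "{x} \<subseteq> S" using x by simp
        show "finite {x \<otimes> z}" by simp
        show "{x \<otimes> z} \<subseteq> zd_star R" using xzZ by simp
        show "card {x \<otimes> z} \<le> card {x}" by simp
        show "\<forall>r\<in>{x}. \<exists>u\<in>S - {x} \<union> {x \<otimes> z}. r \<otimes> u = \<zero>" using 1 by blast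
        show "\<forall>r\<in>{x}. \<exists>a\<in>{x \<otimes> z}. \<exists>c\<in>carrier R. a = r \<otimes> c" using x(2) by blast
        show "\<forall>a\<in>{x \<otimes> z}. \<exists>u\<in>S - {x} \<union> {x \<otimes> z}. a \<otimes> u = \<zero>" using 2 by blast
        have "x \<in> badS R S" using bad_iff x(1) allbad by blast
        then show "{x} \<inter> badS R S \<noteq> {}" by blast
      qed
      then show ?thesis by (rule exI)
    qed
    have moveT: ?thesis if x: "p \<in> S" "q \<in> S" "w \<in> S" "p \<noteq> q" "p \<noteq> w" "q \<noteq> w" "p \<otimes> q \<otimes> w = \<zero>" for p q w
    proof -
      have c: "p \<in> carrier R" "q \<in> carrier R" "w \<in> carrier R" using x Sc by auto
      have pqw: "p \<otimes> (q \<otimes> w) = \<zero>" "q \<otimes> (w \<otimes> p) = \<zero>" "w \<otimes> (p \<otimes> q) = \<zero>"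
        "q \<otimes> (p \<otimes> w) = \<zero>" "w \<otimes> (q \<otimes> p) = \<zero>" "p \<otimes> (w \<otimes> q) = \<zero>"
        using x c by (simp_all add: m_ac)
      have Z: "p \<otimes> q \<in> zd_star R" "q \<otimes> w \<in> zd_star R" "w \<otimes> p \<in> zd_star R"
        using zd_mult[of p q] zd_mult[of q w] zd_mult[of w p] x c SZ allbad by auto
      have pr: "(p \<otimes> q) \<otimes> (q \<otimes> w) = \<zero>" "(q \<otimes> w) \<otimes> (w \<otimes> p) = \<zero>" "(w \<otimes> p) \<otimes> (p \<otimes> q) = \<zero>"
               "(q \<otimes> w) \<otimes> (p \<otimes> q) = \<zero>" "(w \<otimes> p) \<otimes> (q \<otimes> w) = \<zero>" "(p \<otimes> q) \<otimes> (w \<otimes> p) = \<zero>"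
      proof -
        have "(p \<otimes> q) \<otimes> (q \<otimes> w) = (p \<otimes> q \<otimes> w) \<otimes> q" using c by (simp add: m_ac)
        then show "(p \<otimes> q) \<otimes> (q \<otimes> w) = \<zero>" using x c by simp
        have "(q \<otimes> w) \<otimes> (w \<otimes> p) = (p \<otimes> q \<otimes> w) \<otimes> w" using c by (simp add: m_ac)
        then show "(q \<otimes> w) \<otimes> (w \<otimes> p) = \<zero>" using x c by simp
        have "(w \<otimes> p) \<otimes> (p \<otimes> q) = (p \<otimes> q \<otimes> w) \<otimes> p" using c by (simp add: m_ac)
        then show "(w \<otimes> p) \<otimes> (p \<otimes> q) = \<zero>" using x c by simp
        have "(q \<otimes> w) \<otimes> (p \<otimes> q) = (p \<otimes> q \<otimes> w) \<otimes> q" using c by (simp add: m_ac)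
        then show "(q \<otimes> w) \<otimes> (p \<otimes> q) = \<zero>" using x c by simp
        have "(w \<otimes> p) \<otimes> (q \<otimes> w) = (p \<otimes> q \<otimes> w) \<otimes> w" using c by (simp add: m_ac)
        then show "(w \<otimes> p) \<otimes> (q \<otimes> w) = \<zero>" using x c by simp
        have "(p \<otimes> q) \<otimes> (w \<otimes> p) = (p \<otimes> q \<otimes> w) \<otimes> p" using c by (simp add: m_ac)
        then show "(p \<otimes> q) \<otimes> (w \<otimes> p) = \<zero>" using x c by simp
      qed
      have "finite ((S - {p, q, w}) \<union> {p \<otimes> q, q \<otimes> w, w \<otimes> p}) \<and> domS R ((S - {p, q, w}) \<union> {p \<otimes> q, q \<otimes> w, w \<otimes> p})
        \<and> card ((S - {p, q, w}) \<union> {p \<otimes> q, q \<otimes> w, w \<otimes> p}) \<le> card S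
        \<and> badS R ((S - {p, q, w}) \<union> {p \<otimes> q, q \<otimes> w, w \<otimes> p}) \<subset> badS R S"
      proof (rule replace[OF fin dom])
        show "card {p \<otimes> q, q \<otimes> w, w \<otimes> p} \<le> card {p, q, w}"
        proof -
          have "card {p \<otimes> q, q \<otimes> w, w \<otimes> p} \<le> 3" by (simp add: card_insert_if)
          moreover have "card {p, q, w} = 3" using x by simp
          ultimately show ?thesis by simp
        qed
        show "\<forall>r\<in>{p, q, w}. \<exists>a\<in>{p \<otimes> q, q \<otimes> w, w \<otimes> p}. \<exists>c\<in>carrier R. a = r \<otimes> c"
          using c by blast
        have "p \<in> badS R S" using bad_iff x(1) allbad by blast
        then show "{p, q, w} \<inter> badS R S \<noteq> {}" by blast
        show "{p, q, w} \<subseteq> S" using x by simp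
        show "finite {p \<otimes> q, q \<otimes> w, w \<otimes> p}" by simp
        show "{p \<otimes> q, q \<otimes> w, w \<otimes> p} \<subseteq> zd_star R" using Z by simp
        show "\<forall>r\<in>{p, q, w}. \<exists>u\<in>S - {p, q, w} \<union> {p \<otimes> q, q \<otimes> w, w \<otimes> p}. r \<otimes> u = \<zero>"
        proof -
          have "p \<otimes> (q \<otimes> w) = \<zero>" "q \<otimes> (w \<otimes> p) = \<zero>" "w \<otimes> (p \<otimes> q) = \<zero>" using pqw by auto
          then show ?thesis by blast
        qed
        show "\<forall>a\<in>{p \<otimes> q, q \<otimes> w, w \<otimes> p}. \<exists>u\<in>S - {p, q, w} \<union> {p \<otimes> q, q \<otimes> w, w \<otimes> p}. a \<otimes> u = \<zero>"
        proof -
          have "(p \<otimes> q) \<otimes> (q \<otimes> w) = \<zero>" "(q \<otimes> w) \<otimes> (w \<otimes> p) = \<zero>" "(w \<otimes> p) \<otimes> (p \<otimes> q) = \<zero>" using pr by auto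
          then show ?thesis by blast
        qed
      qed
      then show ?thesis by (rule exI)
    qed
    have moveP: ?thesis if x: "p \<in> S" "q \<in> S" "p \<noteq> q" "y \<in> carrier R" "y \<noteq> \<zero>" "p \<otimes> y = \<zero>" "q \<otimes> y = \<zero>" for p q y
    proof -
      have c: "p \<in> carrier R" "q \<in> carrier R" using x Sc by auto
      have yZ: "y \<in> zd_star R" using zdI[of y p] x c SZ zdD(2) by (auto simp: m_comm)
      have pqy: "(p \<otimes> q) \<otimes> y = \<zero>" "y \<otimes> (p \<otimes> q) = \<zero>" using zero3[of p q y] x c by simp_all
      have Z: "p \<otimes> q \<in> zd_star R" using zd_mult[of p q] x c SZ allbad by auto
      have "finite ((S - {p, q}) \<union> {p \<otimes> q, y}) \<and> domS R ((S - {p, q}) \<union> {p \<otimes> q, y})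
        \<and> card ((S - {p, q}) \<union> {p \<otimes> q, y}) \<le> card S
        \<and> badS R ((S - {p, q}) \<union> {p \<otimes> q, y}) \<subset> badS R S"
      proof (rule replace[OF fin dom])
        show "card {p \<otimes> q, y} \<le> card {p, q}"
          using x by (simp add: card_insert_if)
        show "\<forall>r\<in>{p, q}. \<exists>a\<in>{p \<otimes> q, y}. \<exists>c\<in>carrier R. a = r \<otimes> c"
          using c m_comm[OF c] by blast
        have "p \<in> badS R S" using bad_iff x(1) allbad by blast
        then show "{p, q} \<inter> badS R S \<noteq> {}" by blast
        show "{p, q} \<subseteq> S" using x by simp
        show "finite {p \<otimes> q, y}" by simp
        show "{p \<otimes> q, y} \<subseteq> zd_star R" using Z yZ by simp
        show "\<forall>r\<in>{p, q}. \<exists>u\<in>S - {p, q} \<union> {p \<otimes> q, y}. r \<otimes> u = \<zero>" using x by blast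
        show "\<forall>a\<in>{p \<otimes> q, y}. \<exists>u\<in>S - {p, q} \<union> {p \<otimes> q, y}. a \<otimes> u = \<zero>" using pqy by blast
      qed
      then show ?thesis by (rule exI)
    qed
    show ?thesis
    proof (rule ccontr)
      assume nt: "\<not> ?thesis"
      have closed: "p \<otimes> q \<in> S" if pq: "p \<in> S" "q \<in> S" for p q
      proof (rule ccontr)
        assume n: "p \<otimes> q \<notin> S"
        have c: "p \<in> carrier R" "q \<in> carrier R" using pq Sc by auto
        have "p \<otimes> q \<in> zd_star R" using zd_mult[of p q] pq c SZ allbad by auto
        then obtain w where w: "w \<in> S" "p \<otimes> q \<otimes> w = \<zero>" using dom n unfolding domS_def by auto
        have wc: "w \<in> carrier R" using w Sc by auto
        show False
        proof (cases "p = q")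
          case True
          then show False using moveE[of p w] w wc pq allbad nt by auto
        next
          case pq': False
          show False
          proof (cases "w = p")
            case True
            have "p \<otimes> p \<otimes> q = \<zero>" using w True c by (simp add: m_ac)
            then show False using moveE[of p q] pq allbad nt c by auto
          next
            case wp: False
            show False
            proof (cases "w = q")
              case True
              have "q \<otimes> q \<otimes> p = \<zero>" using w True c by (simp add: m_ac)
              then show False using moveE[of q p] pq allbad nt c by auto
            next
              case False
              then show False using moveT[of p q w] pq w wp pq' nt by auto
            qed
          qed
        qed
      qed
      have eq: "p \<otimes> q = p" if pq: "p \<in> S" "q \<in> S" for p q
      proof (rule ccontr)
        assume n: "p \<otimes> q \<noteq> p"
        have c: "p \<in> carrier R" "q \<in> carrier R" using pq Sc by auto
        obtain y where y: "y \<in> carrier R" "y \<noteq> \<zero>" "p \<otimes> y = \<zero>" using zdD[of p] pq SZ by auto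
        have "p \<otimes> q \<otimes> y = \<zero>" using zero3[of p q y] y c by simp
        then show False using moveP[of "p \<otimes> q" p y] closed[OF pq] pq n y nt by auto
      qed
      have "S = {b} \<and> b \<otimes> b = b"
      proof
        show "b \<otimes> b = b" using eq bS by auto
        show "S = {b}"
        proof
          show "S \<subseteq> {b}"
          proof
            fix q assume q: "q \<in> S"
            have "b \<otimes> q = b" using eq bS q by auto
            moreover have "q \<otimes> b = q" using eq bS q by auto
            ultimately show "q \<in> {b}" using bc q Sc by (auto simp: m_comm)
          qed
        qed (use bS in auto)
      qed
      then show False using ne by auto
    qed
  qed
qed

end



lemma ZMod2_hom: "ZMod 2 \<in> ring_hom \<Z> (ZFact 2)"
proof -
  have "ZMod 2 = (+>\<^bsub>\<Z>\<^esub>) (Idl\<^bsub>\<Z>\<^esub> {2})" by (rule ext) (simp add: ZMod_def)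
  moreover have "ideal (Idl\<^bsub>\<Z>\<^esub> {2}) \<Z>" by (rule int.genideal_ideal) simp
  ultimately show ?thesis unfolding ZFact_def using ideal.rcos_ring_hom by metis
qed

lemma ZFact2_carrier: "Y \<in> carrier (ZFact 2) \<Longrightarrow> \<exists>k. Y = ZMod 2 k"
  by (auto simp: ZFact_def FactRing_def A_RCOSETS_def RCOSETS_def ZMod_def a_r_coset_def)

lemma RDP_simps:
  "carrier (RDirProd A B) = carrier A \<times> carrier B"
  "(a, b) \<otimes>\<^bsub>RDirProd A B\<^esub> (c, d) = (a \<otimes>\<^bsub>A\<^esub> c, b \<otimes>\<^bsub>B\<^esub> d)"
  "(a, b) \<oplus>\<^bsub>RDirProd A B\<^esub> (c, d) = (a \<oplus>\<^bsub>A\<^esub> c, b \<oplus>\<^bsub>B\<^esub> d)"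
  "\<one>\<^bsub>RDirProd A B\<^esub> = (\<one>\<^bsub>A\<^esub>, \<one>\<^bsub>B\<^esub>)"
  by (simp_all add: RDirProd_def DirProd_def monoid.defs)


context cring begin

lemma exc_basic:
  assumes eZ: "e \<in> zd_star R" and ee: "e \<otimes> e = e"
    and H: "\<forall>v\<in>zd_star R. v \<noteq> e \<longrightarrow> v \<otimes> e = \<zero>"
  shows "\<one> \<ominus> e \<in> carrier R" "e \<otimes> (\<one> \<ominus> e) = \<zero>" "\<one> \<ominus> e \<noteq> \<zero>"
    "\<forall>r\<in>carrier R. e \<otimes> r = \<zero> \<or> e \<otimes> r = e" "e \<oplus> e = \<zero>"
    "(\<one> \<ominus> e) \<otimes> (\<one> \<ominus> e) = \<one> \<ominus> e"
proof -
  have ec: "e \<in> carrier R" and e0: "e \<noteq> \<zero>" using eZ unfolding zd_star_def by auto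
  obtain y where y: "y \<in> carrier R" "y \<noteq> \<zero>" "e \<otimes> y = \<zero>" using eZ unfolding zd_star_def by auto
  show fc: "\<one> \<ominus> e \<in> carrier R" using ec by simp
  show ef: "e \<otimes> (\<one> \<ominus> e) = \<zero>" using ec ee by (simp add: a_minus_def r_distr r_minus r_neg)
  show f0: "\<one> \<ominus> e \<noteq> \<zero>"
  proof
    assume "\<one> \<ominus> e = \<zero>"
    then have "e = \<one>" using ec by (metis minus_equality r_neg r_zero one_closed add.inv_closed a_minus_def
        add.m_comm add.inv_inv zero_closed)
    then show False using y by simp
  qed
  show A: "\<forall>r\<in>carrier R. e \<otimes> r = \<zero> \<or> e \<otimes> r = e"
  proof (intro ballI)
    fix r assume r: "r \<in> carrier R"
    show "e \<otimes> r = \<zero> \<or> e \<otimes> r = e"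
    proof (rule ccontr)
      assume n: "\<not> ?thesis"
      have "(e \<otimes> r) \<otimes> (\<one> \<ominus> e) = r \<otimes> (e \<otimes> (\<one> \<ominus> e))" using r ec fc by (simp add: m_ac)
      then have "(e \<otimes> r) \<otimes> (\<one> \<ominus> e) = \<zero>" using ef r by simp
      then have "e \<otimes> r \<in> zd_star R" unfolding zd_star_def using n r ec fc f0 m_closed[OF ec r] by blast
      then have "e \<otimes> r \<otimes> e = \<zero>" using H n by auto
      moreover have "e \<otimes> r \<otimes> e = e \<otimes> r"
      proof -
        have "e \<otimes> r \<otimes> e = (e \<otimes> e) \<otimes> r" using r ec by (simp add: m_ac)
        then show ?thesis using ee by simp
      qed
      ultimately show False using n by simp
    qed
  qed
  show "e \<oplus> e = \<zero>"
  proof -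
    have "e \<oplus> e = e \<otimes> (\<one> \<oplus> \<one>)" using ec by (simp add: r_distr)
    then have "e \<oplus> e = \<zero> \<or> e \<oplus> e = e" using A by simp
    moreover have "e \<oplus> e \<noteq> e"
    proof
      assume "e \<oplus> e = e"
      then have "e \<oplus> e = e \<oplus> \<zero>" using ec by simp
      then have "e = \<zero>" using ec by (metis add.l_cancel zero_closed)
      then show False using e0 by simp
    qed
    ultimately show ?thesis by simp
  qed
  show "(\<one> \<ominus> e) \<otimes> (\<one> \<ominus> e) = \<one> \<ominus> e"
  proof -
    have "(\<one> \<ominus> e) \<otimes> (\<one> \<ominus> e) = \<one> \<otimes> (\<one> \<ominus> e) \<ominus> e \<otimes> (\<one> \<ominus> e)"
      using ec fc by (simp add: a_minus_def l_distr l_minus)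
    then show ?thesis using ef fc by (simp add: a_minus_def)
  qed
qed

end

definition Dring :: "('a, 'b) ring_scheme \<Rightarrow> 'a \<Rightarrow> 'a ring" where
  "Dring R e = \<lparr>carrier = {x \<in> carrier R. x \<otimes>\<^bsub>R\<^esub> e = \<zero>\<^bsub>R\<^esub>}, monoid.mult = monoid.mult R,
     one = \<one>\<^bsub>R\<^esub> \<ominus>\<^bsub>R\<^esub> e, ring.zero = \<zero>\<^bsub>R\<^esub>, ring.add = ring.add R\<rparr>"

lemma Dring_simps:
  "carrier (Dring R e) = {x \<in> carrier R. x \<otimes>\<^bsub>R\<^esub> e = \<zero>\<^bsub>R\<^esub>}"
  "monoid.mult (Dring R e) = monoid.mult R" "one (Dring R e) = \<one>\<^bsub>R\<^esub> \<ominus>\<^bsub>R\<^esub> e"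
  "\<zero>\<^bsub>Dring R e\<^esub> = \<zero>\<^bsub>R\<^esub>" "ring.add (Dring R e) = ring.add R"
  by (simp_all add: Dring_def)

context cring begin

lemma Dring_domain:
  assumes eZ: "e \<in> zd_star R" and ee: "e \<otimes> e = e"
    and H: "\<forall>v\<in>zd_star R. v \<noteq> e \<longrightarrow> v \<otimes> e = \<zero>"
  shows "domain (Dring R e)"
proof -
  note B = exc_basic[OF eZ ee H]
  have ec: "e \<in> carrier R" and e0: "e \<noteq> \<zero>" using eZ unfolding zd_star_def by auto
  let ?f = "\<one> \<ominus> e"
  have fc: "?f \<in> carrier R" using B by simp
  have fe: "?f \<otimes> e = \<zero>" using B ec fc by (simp add: m_comm)
  have Dc: "x \<in> carrier (Dring R e) \<longleftrightarrow> x \<in> carrier R \<and> x \<otimes> e = \<zero>" for x by (simp add: Dring_simps)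
  have ex: "e \<otimes> x = \<zero>" if "x \<in> carrier R" "x \<otimes> e = \<zero>" for x using that ec by (simp add: m_comm)
  have ag: "abelian_group (Dring R e)"
  proof (rule abelian_groupI)
    fix x assume x: "x \<in> carrier (Dring R e)"
    show "\<exists>y\<in>carrier (Dring R e). y \<oplus>\<^bsub>Dring R e\<^esub> x = \<zero>\<^bsub>Dring R e\<^esub>"
    proof (intro bexI)
      show "\<ominus> x \<oplus>\<^bsub>Dring R e\<^esub> x = \<zero>\<^bsub>Dring R e\<^esub>" using x by (simp add: Dring_simps l_neg)
      show "\<ominus> x \<in> carrier (Dring R e)" using x ec by (simp add: Dring_simps l_minus)
    qed
  qed (use ec in \<open>auto simp: Dring_simps l_distr a_ac\<close>)
  have cm: "comm_monoid (Dring R e)"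
  proof (rule comm_monoidI)
    fix x y assume xy: "x \<in> carrier (Dring R e)" "y \<in> carrier (Dring R e)"
    then have "x \<otimes> y \<otimes> e = x \<otimes> (y \<otimes> e)" using ec by (simp add: Dring_simps m_assoc)
    then show "x \<otimes>\<^bsub>Dring R e\<^esub> y \<in> carrier (Dring R e)" using xy by (simp add: Dring_simps)
  next
    fix x assume x: "x \<in> carrier (Dring R e)"
    have "?f \<otimes> x = x \<ominus> e \<otimes> x" using x ec by (simp add: Dring_simps a_minus_def l_distr l_minus)
    then show "\<one>\<^bsub>Dring R e\<^esub> \<otimes>\<^bsub>Dring R e\<^esub> x = x" using x ex by (simp add: Dring_simps a_minus_def)
  qed (use fc fe ec in \<open>auto simp: Dring_simps m_ac\<close>)
  have cr: "cring (Dring R e)"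
    by (rule cringI[OF ag cm]) (auto simp: Dring_simps l_distr)
  show ?thesis
  proof (rule domainI[OF cr], unfold Dring_simps)
    show "?f \<noteq> \<zero>" using B by simp
  next
    fix a b assume ab: "a \<otimes> b = \<zero>" "a \<in> {x \<in> carrier R. x \<otimes> e = \<zero>}" "b \<in> {x \<in> carrier R. x \<otimes> e = \<zero>}"
    show "a = \<zero> \<or> b = \<zero>"
    proof (rule ccontr)
      assume n: "\<not> ?thesis"
      have ac: "a \<in> carrier R" "a \<otimes> e = \<zero>" "b \<in> carrier R" "b \<otimes> e = \<zero>" using ab by auto
      let ?w = "e \<oplus> a"
      have wc: "?w \<in> carrier R" using ec ac by simp
      have ew: "e \<otimes> ?w = e" using ec ac ee ex[of a] by (simp add: r_distr)
      have w0: "?w \<noteq> \<zero>" using ew e0 ec by auto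
      have wb: "?w \<otimes> b = \<zero>" using ec ac ab(1) ex[of b] by (simp add: l_distr)
      have wZ: "?w \<in> zd_star R" unfolding zd_star_def using wc w0 wb ac n by blast
      have we: "?w \<noteq> e"
      proof
        assume "?w = e"
        then have "e \<oplus> a = e \<oplus> \<zero>" using ec by simp
        then have "a = \<zero>" using ec ac by (metis add.l_cancel zero_closed)
        then show False using n by simp
      qed
      have "?w \<otimes> e = e" using ec ac ee by (simp add: l_distr)
      then show False using H wZ we e0 by auto
    qed
  qed
qed


lemma ZMod2_facts:
  "ZMod 2 k \<in> carrier (ZFact 2)"
  "ZMod 2 (a * b) = ZMod 2 a \<otimes>\<^bsub>ZFact 2\<^esub> ZMod 2 b"
  "ZMod 2 (a + b) = ZMod 2 a \<oplus>\<^bsub>ZFact 2\<^esub> ZMod 2 b"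
  "ZMod 2 1 = \<one>\<^bsub>ZFact 2\<^esub>"
  using ring_hom_closed[OF ZMod2_hom, of k] ring_hom_mult[OF ZMod2_hom, of a b]
    ring_hom_add[OF ZMod2_hom, of a b] ring_hom_one[OF ZMod2_hom] by simp_all

lemma exc_iso:
  assumes eZ: "e \<in> zd_star R" and ee: "e \<otimes> e = e"
    and H: "\<forall>v\<in>zd_star R. v \<noteq> e \<longrightarrow> v \<otimes> e = \<zero>"
  shows "R \<simeq> RDirProd (ZFact 2) (Dring R e)"
proof -
  note B = exc_basic[OF eZ ee H]
  have ec: "e \<in> carrier R" and e0: "e \<noteq> \<zero>" using eZ unfolding zd_star_def by auto
  define f where "f = \<one> \<ominus> e"
  have fc: "f \<in> carrier R" and ef: "e \<otimes> f = \<zero>" and ff: "f \<otimes> f = f" and ee2: "e \<oplus> e = \<zero>"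
    and A: "\<And>r. r \<in> carrier R \<Longrightarrow> e \<otimes> r = \<zero> \<or> e \<otimes> r = e"
    using B unfolding f_def by auto
  have fe: "f \<otimes> e = \<zero>" using ef ec fc by (simp add: m_comm)
  have fx: "f \<otimes> x = x \<ominus> e \<otimes> x" if "x \<in> carrier R" for x
    using that ec unfolding f_def by (simp add: a_minus_def l_distr l_minus)
  have decomp: "x = e \<otimes> x \<oplus> f \<otimes> x" if x: "x \<in> carrier R" for x
  proof -
    have "e \<otimes> x \<oplus> f \<otimes> x = e \<otimes> x \<oplus> (x \<ominus> e \<otimes> x)" using fx x by simp
    also have "\<dots> = x" using x ec by (simp add: a_minus_def a_ac r_neg)
    finally show ?thesis by simp
  qed
  define chi where "chi r = (if e \<otimes> r = \<zero> then 0 else (1::int))" for r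
  define \<phi> where "\<phi> r = (ZMod 2 (chi r), f \<otimes> r)" for r
  have Dc: "x \<in> carrier (Dring R e) \<longleftrightarrow> x \<in> carrier R \<and> x \<otimes> e = \<zero>" for x by (simp add: Dring_simps)
  have fxD: "f \<otimes> x \<in> carrier (Dring R e)" if "x \<in> carrier R" for x
  proof -
    have "f \<otimes> x \<otimes> e = x \<otimes> (f \<otimes> e)" using that fc ec by (simp add: m_ac)
    then show ?thesis using that fc fe Dc by simp
  qed
  have exy: "e \<otimes> (x \<otimes> y) = (e \<otimes> x) \<otimes> (e \<otimes> y)" if "x \<in> carrier R" "y \<in> carrier R" for x y
  proof -
    have "(e \<otimes> x) \<otimes> (e \<otimes> y) = (e \<otimes> e) \<otimes> (x \<otimes> y)" using that ec by (simp add: m_ac)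
    then show ?thesis using ee by simp
  qed
  have chi_mult: "chi (x \<otimes> y) = chi x * chi y" if "x \<in> carrier R" "y \<in> carrier R" for x y
    using A[OF that(1)] A[OF that(2)] exy[OF that] ee e0 ec unfolding chi_def by auto
  have chi_add: "chi (x \<oplus> y) mod 2 = (chi x + chi y) mod 2" if "x \<in> carrier R" "y \<in> carrier R" for x y
  proof -
    have "e \<otimes> (x \<oplus> y) = e \<otimes> x \<oplus> e \<otimes> y" using that ec by (simp add: r_distr)
    then show ?thesis using A[OF that(1)] A[OF that(2)] ee2 e0 ec unfolding chi_def by auto
  qed
  have chi_one: "chi \<one> = 1" using e0 ec unfolding chi_def by simp
  have hom: "\<phi> \<in> ring_hom R (RDirProd (ZFact 2) (Dring R e))"
  proof (rule ring_hom_memI)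
    fix x assume x: "x \<in> carrier R"
    show "\<phi> x \<in> carrier (RDirProd (ZFact 2) (Dring R e))"
      unfolding \<phi>_def RDP_simps using ZMod2_facts(1) fxD[OF x] by simp
  next
    fix x y assume xy: "x \<in> carrier R" "y \<in> carrier R"
    have "f \<otimes> (x \<otimes> y) = (f \<otimes> x) \<otimes> (f \<otimes> y)"
    proof -
      have "(f \<otimes> x) \<otimes> (f \<otimes> y) = (f \<otimes> f) \<otimes> (x \<otimes> y)" using xy fc by (simp add: m_ac)
      then show ?thesis using ff by simp
    qed
    then show "\<phi> (x \<otimes> y) = \<phi> x \<otimes>\<^bsub>RDirProd (ZFact 2) (Dring R e)\<^esub> \<phi> y"
      unfolding \<phi>_def RDP_simps using chi_mult[OF xy] ZMod2_facts(2) by (simp add: Dring_simps)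
  next
    fix x y assume xy: "x \<in> carrier R" "y \<in> carrier R"
    have "ZMod 2 (chi (x \<oplus> y)) = ZMod 2 (chi x + chi y)"
      using chi_add[OF xy] by (simp add: ZMod_eq_mod)
    moreover have "f \<otimes> (x \<oplus> y) = f \<otimes> x \<oplus> f \<otimes> y" using xy fc by (simp add: r_distr)
    ultimately show "\<phi> (x \<oplus> y) = \<phi> x \<oplus>\<^bsub>RDirProd (ZFact 2) (Dring R e)\<^esub> \<phi> y"
      unfolding \<phi>_def RDP_simps using ZMod2_facts(3) by (simp add: Dring_simps)
  next
    show "\<phi> \<one> = \<one>\<^bsub>RDirProd (ZFact 2) (Dring R e)\<^esub>"
      unfolding \<phi>_def RDP_simps using chi_one ZMod2_facts(4) fc by (simp add: Dring_simps f_def)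
  qed
  have inj: "inj_on \<phi> (carrier R)"
  proof (rule inj_onI)
    fix x y assume x: "x \<in> carrier R" and y: "y \<in> carrier R" and eq: "\<phi> x = \<phi> y"
    then have "ZMod 2 (chi x) = ZMod 2 (chi y)" and fxy: "f \<otimes> x = f \<otimes> y" unfolding \<phi>_def by auto
    then have "chi x mod 2 = chi y mod 2" by (simp add: ZMod_eq_mod)
    then have "chi x = chi y" unfolding chi_def by (auto split: if_splits)
    then have "e \<otimes> x = e \<otimes> y" using A[OF x] A[OF y] unfolding chi_def by (auto split: if_splits)
    then show "x = y" using decomp[OF x] decomp[OF y] fxy by simp
  qed
  have surj: "\<phi> ` carrier R = carrier (RDirProd (ZFact 2) (Dring R e))"
  proof
    show "\<phi> ` carrier R \<subseteq> carrier (RDirProd (ZFact 2) (Dring R e))"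
      using ring_hom_closed[OF hom] by auto
    show "carrier (RDirProd (ZFact 2) (Dring R e)) \<subseteq> \<phi> ` carrier R"
    proof
      fix p assume p: "p \<in> carrier (RDirProd (ZFact 2) (Dring R e))"
      then obtain Y d where pd: "p = (Y, d)" "Y \<in> carrier (ZFact 2)" "d \<in> carrier (Dring R e)"
        unfolding RDP_simps by auto
      obtain k where k: "Y = ZMod 2 k" using ZFact2_carrier[OF pd(2)] by auto
      have dc: "d \<in> carrier R" "d \<otimes> e = \<zero>" using pd(3) Dc by auto
      have ed: "e \<otimes> d = \<zero>" using dc ec by (simp add: m_comm)
      have fd: "f \<otimes> d = d" using fx[OF dc(1)] ed dc by (simp add: a_minus_def)
      show "p \<in> \<phi> ` carrier R"
      proof (cases "k mod 2 = 0")
        case True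
        have "\<phi> d = (ZMod 2 0, d)" unfolding \<phi>_def chi_def using ed fd by simp
        moreover have "ZMod 2 0 = ZMod 2 k" using True by (simp add: ZMod_eq_mod)
        ultimately show ?thesis using pd k dc by (metis image_eqI)
      next
        case False
        then have k1: "k mod 2 = 1" by presburger
        have c: "e \<oplus> d \<in> carrier R" using ec dc by simp
        have "e \<otimes> (e \<oplus> d) = e" using ec dc ee ed by (simp add: r_distr)
        moreover have "f \<otimes> (e \<oplus> d) = d" using ec dc fc fe fd by (simp add: r_distr)
        ultimately have "\<phi> (e \<oplus> d) = (ZMod 2 1, d)" unfolding \<phi>_def chi_def using e0 by simp
        moreover have "ZMod 2 1 = ZMod 2 k" using k1 by (simp add: ZMod_eq_mod)
        ultimately show ?thesis using pd k c by (metis image_eqI)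
      qed
    qed
  qed
  have "\<phi> \<in> ring_iso R (RDirProd (ZFact 2) (Dring R e))"
    unfolding ring_iso_def bij_betw_def using hom inj surj by auto
  then show ?thesis unfolding is_ring_iso_def by auto
qed

end

context cring begin

lemma reduce:
  assumes noexc: "\<not> (\<exists>e\<in>zd_star R. e \<otimes> e = e \<and> (\<forall>v\<in>zd_star R. v \<noteq> e \<longrightarrow> v \<otimes> e = \<zero>))"
  shows "finite S \<Longrightarrow> domS R S \<Longrightarrow> \<exists>S'. finite S' \<and> domS R S' \<and> card S' \<le> card S \<and> badS R S' = {}"
proof (induction "card (badS R S)" arbitrary: S rule: less_induct)
  case less
  show ?case
  proof (cases "badS R S = {}")
    case True then show ?thesis using less.prems by auto
  next
    case False
    have ne: "\<not> (\<exists>e. S = {e} \<and> e \<otimes> e = e)"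
    proof
      assume "\<exists>e. S = {e} \<and> e \<otimes> e = e"
      then obtain e where e: "S = {e}" "e \<otimes> e = e" by auto
      have "e \<in> zd_star R" "\<forall>v\<in>zd_star R. v \<noteq> e \<longrightarrow> v \<otimes> e = \<zero>"
        using less.prems(2) e unfolding domS_def by auto
      then show False using noexc e by auto
    qed
    obtain S' where S': "finite S'" "domS R S'" "card S' \<le> card S" "badS R S' \<subset> badS R S"
      using step[OF less.prems False ne] by auto
    have "finite (badS R S)" using less.prems(1) unfolding badS_def by auto
    then have "card (badS R S') < card (badS R S)" using S'(4) by (rule psubset_card_mono)
    then obtain S'' where "finite S''" "domS R S''" "card S'' \<le> card S'" "badS R S'' = {}"
      using less.hyps S'(1,2) by blast
    then show ?thesis using S'(3) by (intro exI[of _ S'']) auto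
  qed
qed

end

theorem theorem4p3:
  fixes R :: "('a, 'b) ring_scheme"
  assumes "cring R"
    and "\<not> domain R"
    and "zd_gamma_t R < \<infinity>"
    and "\<not> (\<exists>D :: 'a ring. domain D \<and> R \<simeq> RDirProd (ZFact 2) D)"
  shows "zd_gamma_t R = zd_gamma R"
proof -
  interpret cring R by (rule assms(1))
  let ?T = "{enat (card S) | S. finite S \<and> zd_total_dominating R S}"
  let ?D = "{enat (card S) | S. finite S \<and> zd_dominating R S}"
  have td: "zd_dominating R S" if "zd_total_dominating R S" for S
    using that unfolding zd_total_dominating_def zd_dominating_def by auto
  have sub: "?T \<subseteq> ?D" using td by blast
  have le1: "zd_gamma R \<le> zd_gamma_t R"
    unfolding zd_gamma_def zd_gamma_t_def by (rule Inf_superset_mono[OF sub])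
  have Tne: "?T \<noteq> {}"
  proof
    assume "?T = {}"
    then have "zd_gamma_t R = \<infinity>" unfolding zd_gamma_t_def by (simp add: Inf_enat_def)
    then show False using assms(3) by simp
  qed
  then have Dne: "?D \<noteq> {}" using sub by blast
  have "Inf ?D \<in> ?D" using Dne unfolding Inf_enat_def by (auto intro: LeastI)
  then obtain S where S: "finite S" "zd_dominating R S" "zd_gamma R = enat (card S)"
    unfolding zd_gamma_def by auto
  have dS: "domS R S" using S(2) unfolding zd_dominating_def domS_def zd_adj_def by auto
  have noexc: "\<not> (\<exists>e\<in>zd_star R. e \<otimes>\<^bsub>R\<^esub> e = e \<and> (\<forall>v\<in>zd_star R. v \<noteq> e \<longrightarrow> v \<otimes>\<^bsub>R\<^esub> e = \<zero>\<^bsub>R\<^esub>))"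
  proof
    assume "\<exists>e\<in>zd_star R. e \<otimes>\<^bsub>R\<^esub> e = e \<and> (\<forall>v\<in>zd_star R. v \<noteq> e \<longrightarrow> v \<otimes>\<^bsub>R\<^esub> e = \<zero>\<^bsub>R\<^esub>)"
    then obtain e where e: "e \<in> zd_star R" "e \<otimes>\<^bsub>R\<^esub> e = e" "\<forall>v\<in>zd_star R. v \<noteq> e \<longrightarrow> v \<otimes>\<^bsub>R\<^esub> e = \<zero>\<^bsub>R\<^esub>" by auto
    have "domain (Dring R e)" by (rule Dring_domain[OF e])
    moreover have "R \<simeq> RDirProd (ZFact 2) (Dring R e)" by (rule exc_iso[OF e])
    ultimately show False using assms(4) by blast
  qed
  obtain S' where S': "finite S'" "domS R S'" "card S' \<le> card S" "badS R S' = {}"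
    using reduce[OF noexc S(1) dS] by auto
  have tot: "zd_total_dominating R S'"
    unfolding zd_total_dominating_def
  proof (intro conjI ballI)
    show SZ: "S' \<subseteq> zd_star R" using S'(2) unfolding domS_def by auto
    fix v assume v: "v \<in> zd_star R"
    show "\<exists>x\<in>S'. zd_adj R v x"
    proof (cases "v \<in> S'")
      case True
      then obtain u where "u \<in> S'" "v \<otimes>\<^bsub>R\<^esub> u = \<zero>\<^bsub>R\<^esub>" using S'(4) unfolding badS_def by auto
      then show ?thesis using v SZ unfolding zd_adj_def by auto
    next
      case False
      then obtain u where "u \<in> S'" "v \<otimes>\<^bsub>R\<^esub> u = \<zero>\<^bsub>R\<^esub>" using S'(2) v unfolding domS_def by auto
      then show ?thesis using v SZ unfolding zd_adj_def by auto
    qed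
  qed
  then have "enat (card S') \<in> ?T" using S'(1) by blast
  then have "zd_gamma_t R \<le> enat (card S')" unfolding zd_gamma_t_def by (rule Inf_lower)
  also have "\<dots> \<le> enat (card S)" using S'(3) by simp
  finally show ?thesis using le1 S(3) by simp
qed

end
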